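(* Let $\lambda\in\mathbb N$ and $N=n+m$ with $n,m\in\mathbb N$. Then $$S_N(\lambda)=(-1)^{\lambda\frac{N(N-1)}{2}}\sum_{\substack{I_{kl}=-\lambda\\ 1\le k<l\le N}}^{\lambda}(-1)^{\sum_{k<l}I_{kl}}\prod_{1\le k<l\le N}\binom{2\lambda}{\lambda+I_{kl}}\prod_{k=1}^N\frac{1}{1+(N-1)\lambda+\sum_{l\ne k}I_{kl}},$$ $$S_{n,m}(\lambda)=(-1)^{\lambda(n(n-1)+m(m-1))/2}\sum_{\substack{I_{kl}=-\lambda\\ 1\le k<l\le N}}^{\lambda}(-1)^{\sum_{k<l}s_{kl}I_{kl}}\prod_{1\le k<l\le N}\binom{2\lambda}{\lambda+I_{kl}}\prod_{k=1}^N\frac{1}{1+(N-1)\lambda+\sum_{l\ne k}I_{kl}}.$$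
   Context: Define $$S_N(\lambda)=\int_{[0,1]^N}\prod_{1\le k<l\le N}|y_k-y_l|^{2\lambda}\,dy,$$ $$S_{n,m}(\lambda)=\int_{[0,1]^N}\prod_{1\le k<l\le n}|y_k-y_l|^{2\lambda}\prod_{\substack{k=1,\dots,n\\ l=n+1,\dots,N}}|y_k+y_l|^{2\lambda}\prod_{n+1\le k<l\le N}|y_k-y_l|^{2\lambda}\,dy.$$ The sums run over all families of integers $I_{kl}\in\{-\lambda,\dots,\lambda\}$, one for each pair $1\le k<l\le N$, and $I_{kl}:=-I_{lk}$ for $k>l$. For $k<l$, $s_{kl}=1$ if the factor for the pair $(k,l)$ in the integrand of $S_{n,m}$ is $|y_k-y_l|^{2\lambda}$ (i.e. $k,l$ both in $\{1,\dots,n\}$ or both in $\{n+1,\dots,N\}$), and $s_{kl}=0$ if it is $|y_k+y_l|^{2\lambda}$. *)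

theory Defs
  imports "HOL-Analysis.Analysis"
begin

definition pairs :: "nat \<Rightarrow> (nat \<times> nat) set" where
  "pairs N = {(k,l). 1 \<le> k \<and> k < l \<and> l \<le> N}"

definition Iext :: "(nat \<times> nat \<Rightarrow> int) \<Rightarrow> nat \<Rightarrow> nat \<Rightarrow> int" where
  "Iext I k l = (if k < l then I (k,l) else - I (l,k))"

text \<open>s_kl = 1 iff k,l lie in the same block {1..n} or {n+1..N}.\<close>
definition sameblock :: "nat \<Rightarrow> nat \<Rightarrow> nat \<Rightarrow> bool" where
  "sameblock n k l = ((k \<le> n) = (l \<le> n))"

definition cube :: "nat \<Rightarrow> (nat \<Rightarrow> real) set" where
  "cube N = PiE {1..N} (\<lambda>_. {0..1})"

definition SN :: "nat \<Rightarrow> nat \<Rightarrow> real" where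
  "SN N lam = (LINT y : cube N | PiM {1..N} (\<lambda>_. lborel).
      (\<Prod>(k,l)\<in>pairs N. \<bar>y k - y l\<bar> ^ (2*lam)))"

definition Snm :: "nat \<Rightarrow> nat \<Rightarrow> nat \<Rightarrow> real" where
  "Snm n m lam = (LINT y : cube (n+m) | PiM {1..n+m} (\<lambda>_. lborel).
      (\<Prod>(k,l)\<in>pairs (n+m).
         (if sameblock n k l then \<bar>y k - y l\<bar> ^ (2*lam) else \<bar>y k + y l\<bar> ^ (2*lam))))"

definition weight :: "nat \<Rightarrow> nat \<Rightarrow> (nat \<times> nat \<Rightarrow> int) \<Rightarrow> real" where
  "weight N lam I =
     (\<Prod>(k,l)\<in>pairs N. real ((2*lam) choose nat (int lam + I (k,l)))) *
     (\<Prod>k\<in>{1..N}. 1 / (1 + (real N - 1) * real lam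
                              + real_of_int (\<Sum>l\<in>{1..N}-{k}. Iext I k l)))"

definition families :: "nat \<Rightarrow> nat \<Rightarrow> (nat \<times> nat \<Rightarrow> int) set" where
  "families N lam = PiE (pairs N) (\<lambda>_. {- int lam .. int lam})"

end

theory Submission imports Defs begin


lemma psf: "product_sigma_finite (\<lambda>_::nat. lborel :: real measure)"
  by (simp add: product_sigma_finite_def sigma_finite_lborel)

lemma int1_integrable: "integrable lborel (\<lambda>x::real. indicator {0..1} x *\<^sub>R x ^ e)"
  using borel_integrable_atLeastAtMost'[of 0 1 "\<lambda>x::real. x ^ e"]
  by (simp add: set_integrable_def continuous_on_power continuous_on_id)

lemma int1: "integral\<^sup>L lborel (\<lambda>x::real. indicator {0..1} x *\<^sub>R x ^ e) = 1 / (real e + 1)"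
proof -
  have "integral\<^sup>L lborel (\<lambda>x::real. indicator {0..1} x *\<^sub>R x ^ e)
      = (\<lambda>x. x ^ (e+1) / (real e + 1)) 1 - (\<lambda>x. x ^ (e+1) / (real e + 1)) 0"
  proof (rule integral_FTC_atLeastAtMost)
    fix x :: real
    have "((\<lambda>x. x ^ (e+1)) has_real_derivative real (e+1) * x ^ e) (at x within {0..1})"
      using DERIV_pow[of "e+1" x "{0..1}"] by simp
    from DERIV_cdivide[OF this, of "real e + 1"]
    have d: "((\<lambda>x. x ^ (e+1) / (real e + 1)) has_real_derivative real (e+1) * x ^ e / (real e + 1)) (at x within {0..1})" .
    have eq: "real (e+1) * x ^ e / (real e + 1) = x ^ e"
      by (simp add: field_simps)
    have "((\<lambda>x. x ^ (e+1) / (real e + 1)) has_real_derivative x ^ e) (at x within {0..1})"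
      using d unfolding eq .
    then show "((\<lambda>x. x ^ (e+1) / (real e + 1)) has_vector_derivative x ^ e) (at x within {0..1})"
      by (simp add: has_real_derivative_iff_has_vector_derivative)
  qed (auto intro: continuous_intros)
  then show ?thesis by simp
qed

lemma cube_ind:
  assumes "y \<in> space (PiM {1..N} (\<lambda>_. lborel :: real measure))"
  shows "indicator (cube N) y * (\<Prod>k\<in>{1..N}. y k ^ e k)
        = (\<Prod>k\<in>{1..N}. indicator {0..1} (y k) *\<^sub>R y k ^ e k)"
proof -
  have ext: "y \<in> PiE {1..N} (\<lambda>_. UNIV)" using assms by (simp add: space_PiM)
  show ?thesis
  proof (cases "\<forall>k\<in>{1..N}. y k \<in> {0..1}")
    case True
    then have "y \<in> cube N" using ext by (auto simp: cube_def PiE_def Pi_def)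
    then show ?thesis using True by (simp add: indicator_def)
  next
    case False
    then obtain k where k: "k \<in> {1..N}" "y k \<notin> {0..1}" by blast
    then have "y \<notin> cube N" by (auto simp: cube_def)
    moreover have "(\<Prod>k\<in>{1..N}. indicator {0..1} (y k) *\<^sub>R y k ^ e k) = 0"
      using k by (auto intro!: prod_zero bexI[of _ k] simp: indicator_def)
    ultimately show ?thesis by simp
  qed
qed

lemma intN:
  "integrable (PiM {1..N} (\<lambda>_. lborel :: real measure)) (\<lambda>y. indicator (cube N) y *\<^sub>R (\<Prod>k\<in>{1..N}. y k ^ e k))
   \<and> integral\<^sup>L (PiM {1..N} (\<lambda>_. lborel :: real measure)) (\<lambda>y. indicator (cube N) y *\<^sub>R (\<Prod>k\<in>{1..N}. y k ^ e k))
     = (\<Prod>k\<in>{1..N}. 1 / (real (e k) + 1))"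
proof -
  interpret P: product_sigma_finite "\<lambda>_::nat. lborel :: real measure" by (rule psf)
  have i: "integrable (PiM {1..N} (\<lambda>_. lborel :: real measure)) (\<lambda>y. \<Prod>k\<in>{1..N}. indicator {0..1} (y k) *\<^sub>R y k ^ e k)"
    using P.product_integrable_prod[of "{1..N}" "\<lambda>k x. indicator {0..1} x *\<^sub>R x ^ e k"] int1_integrable by (simp add: real_scaleR_def)
  have v: "integral\<^sup>L (PiM {1..N} (\<lambda>_. lborel :: real measure)) (\<lambda>y. \<Prod>k\<in>{1..N}. indicator {0..1} (y k) *\<^sub>R y k ^ e k)
     = (\<Prod>k\<in>{1..N}. 1 / (real (e k) + 1))"
    by (subst P.product_integral_prod[where f="\<lambda>k x. indicator {0..1} x *\<^sub>R x ^ e k"]) (auto intro: int1_integrable[simplified] simp: int1[simplified])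
  have eq: "\<And>y. y \<in> space (PiM {1..N} (\<lambda>_. lborel :: real measure)) \<Longrightarrow> indicator (cube N) y *\<^sub>R (\<Prod>k\<in>{1..N}. y k ^ e k)
     = (\<Prod>k\<in>{1..N}. indicator {0..1} (y k) *\<^sub>R y k ^ e k)"
    using cube_ind by simp
  have c1: "integrable (PiM {1..N} (\<lambda>_. lborel :: real measure)) (\<lambda>y. indicator (cube N) y *\<^sub>R (\<Prod>k\<in>{1..N}. y k ^ e k))
     = integrable (PiM {1..N} (\<lambda>_. lborel :: real measure)) (\<lambda>y. \<Prod>k\<in>{1..N}. indicator {0..1} (y k) *\<^sub>R y k ^ e k)"
    by (rule Bochner_Integration.integrable_cong[OF refl]) (rule eq)
  have c2: "integral\<^sup>L (PiM {1..N} (\<lambda>_. lborel :: real measure)) (\<lambda>y. indicator (cube N) y *\<^sub>R (\<Prod>k\<in>{1..N}. y k ^ e k))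
     = integral\<^sup>L (PiM {1..N} (\<lambda>_. lborel :: real measure)) (\<lambda>y. \<Prod>k\<in>{1..N}. indicator {0..1} (y k) *\<^sub>R y k ^ e k)"
    by (rule Bochner_Integration.integral_cong[OF refl]) (rule eq)
  show ?thesis using i v c1 c2 by simp
qed


lemma binexp: "((a::real) + s * b)^(2*lam) = (\<Sum>i\<in>{-int lam..int lam}. real((2*lam) choose nat(int lam + i)) * a^nat(int lam + i) * s^nat(int lam - i) * b^nat(int lam - i))"
proof -
  have "((a::real) + s * b)^(2*lam) = (\<Sum>j\<le>2*lam. real ((2*lam) choose j) * a^j * (s*b)^(2*lam - j))"
    by (simp add: binomial_ring)
  also have "\<dots> = (\<Sum>i\<in>{-int lam..int lam}. real((2*lam) choose nat(int lam + i)) * a^nat(int lam + i) * s^nat(int lam - i) * b^nat(int lam - i))"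
  proof (rule sum.reindex_bij_witness[where i="\<lambda>i. nat(int lam + i)" and j="\<lambda>j. int j - int lam"])
    fix j assume "j \<in> {..2*lam}"
    then have "nat (int lam - (int j - int lam)) = 2*lam - j" by auto
    then show "real((2*lam) choose nat(int lam + (int j - int lam))) * a^nat(int lam + (int j - int lam)) * s^nat(int lam - (int j - int lam)) * b^nat(int lam - (int j - int lam))
        = real ((2*lam) choose j) * a^j * (s*b)^(2*lam - j)"
      by (simp add: power_mult_distrib)
  qed auto
  finally show ?thesis .
qed

lemma m1powi: "(-1::real) powi i = (if even i then 1 else -1)"
  by (cases "i \<ge> 0") (auto simp: power_int_def minus_one_power_iff even_nat_iff)

lemma signlem:
  assumes "i \<in> {-int lam..int lam}"
  shows "(-1::real)^nat(int lam - i) = (-1)^lam * (-1) powi i"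
proof -
  have "even (nat(int lam - i)) \<longleftrightarrow> (even lam \<longleftrightarrow> even i)"
    using assms by (simp add: even_nat_iff)
  then show ?thesis by (auto simp: m1powi minus_one_power_iff)
qed

lemma prod_powi: "finite A \<Longrightarrow> (\<Prod>p\<in>A. (-1::real) powi f p) = (-1) powi (\<Sum>p\<in>A. f p)"
  by (induction A rule: finite_induct) (auto simp: power_int_add)

lemma finite_pairs: "finite (pairs N)"
  by (rule finite_subset[of _ "{1..N} \<times> {1..N}"]) (auto simp: pairs_def)

lemma regroup:
  fixes y :: "nat \<Rightarrow> real"
  shows "(\<Prod>p\<in>pairs N. y (fst p) ^ a p) * (\<Prod>p\<in>pairs N. y (snd p) ^ b p)
       = (\<Prod>k\<in>{1..N}. y k ^ ((\<Sum>l\<in>{k<..N}. a(k,l)) + (\<Sum>l\<in>{1..<k}. b(l,k))))"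
proof -
  have P1: "pairs N = Sigma {1..N} (\<lambda>k. {k<..N})" by (auto simp: pairs_def)
  have P2: "pairs N = (\<lambda>(l,k). (k,l)) ` Sigma {1..N} (\<lambda>l. {1..<l})" 
    by (auto simp: pairs_def image_iff)
  have inj: "inj_on (\<lambda>(l,k). (k::nat,l::nat)) X" for X by (auto simp: inj_on_def)
  have "(\<Prod>p\<in>pairs N. y (fst p) ^ a p) = (\<Prod>k\<in>{1..N}. \<Prod>l\<in>{k<..N}. y k ^ a(k,l))"
    unfolding P1 by (subst prod.Sigma) (auto simp: case_prod_beta)
  also have "\<dots> = (\<Prod>k\<in>{1..N}. y k ^ (\<Sum>l\<in>{k<..N}. a(k,l)))"
    by (simp add: power_sum)
  finally have X1: "(\<Prod>p\<in>pairs N. y (fst p) ^ a p) = \<dots>" .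
  have "(\<Prod>p\<in>pairs N. y (snd p) ^ b p) = (\<Prod>q\<in>Sigma {1..N} (\<lambda>l. {1..<l}). y (fst q) ^ b (snd q, fst q))"
    unfolding P2 by (subst prod.reindex[OF inj]) (simp add: case_prod_beta)
  also have "\<dots> = (\<Prod>l\<in>{1..N}. \<Prod>k\<in>{1..<l}. y l ^ b(k,l))"
    by (subst prod.Sigma) (auto simp: case_prod_beta)
  also have "\<dots> = (\<Prod>l\<in>{1..N}. y l ^ (\<Sum>k\<in>{1..<l}. b(k,l)))"
    by (simp add: power_sum)
  finally have X2: "(\<Prod>p\<in>pairs N. y (snd p) ^ b p) = \<dots>" .
  show ?thesis unfolding X1 X2 by (simp add: prod.distrib[symmetric] power_add)
qed

definition ex :: "nat \<Rightarrow> nat \<Rightarrow> (nat \<times> nat \<Rightarrow> int) \<Rightarrow> nat \<Rightarrow> nat" where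
  "ex N lam I k = (\<Sum>l\<in>{k<..N}. nat(int lam + I(k,l))) + (\<Sum>l\<in>{1..<k}. nat(int lam - I(l,k)))"

lemma fam_range: "I \<in> families N lam \<Longrightarrow> p \<in> pairs N \<Longrightarrow> I p \<in> {-int lam..int lam}"
  unfolding families_def by (rule PiE_mem)

lemma exlem:
  assumes I: "I \<in> families N lam" and k: "k \<in> {1..N}"
  shows "real (ex N lam I k) = (real N - 1) * real lam + real_of_int (\<Sum>l\<in>{1..N}-{k}. Iext I k l)"
proof -
  have A: "int (\<Sum>l\<in>{k<..N}. nat(int lam + I(k,l))) = (\<Sum>l\<in>{k<..N}. int lam + I(k,l))"
    unfolding of_nat_sum
  proof (rule sum.cong[OF refl])
    fix l assume "l \<in> {k<..N}"
    then have "(k,l) \<in> pairs N" using k by (auto simp: pairs_def)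
    then show "int (nat (int lam + I (k, l))) = int lam + I (k, l)" using fam_range[OF I] by force
  qed
  have B: "int (\<Sum>l\<in>{1..<k}. nat(int lam - I(l,k))) = (\<Sum>l\<in>{1..<k}. int lam - I(l,k))"
    unfolding of_nat_sum
  proof (rule sum.cong[OF refl])
    fix l assume "l \<in> {1..<k}"
    then have "(l,k) \<in> pairs N" using k by (auto simp: pairs_def)
    then show "int (nat (int lam - I (l, k))) = int lam - I (l, k)" using fam_range[OF I] by force
  qed
  have U: "{1..N}-{k} = {1..<k} \<union> {k<..N}" using k by auto
  have C: "(\<Sum>l\<in>{1..N}-{k}. Iext I k l) = (\<Sum>l\<in>{k<..N}. I(k,l)) + (\<Sum>l\<in>{1..<k}. - I(l,k))"
    unfolding U by (subst sum.union_disjoint) (auto simp: Iext_def intro!: sum.cong)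
  have "int (ex N lam I k) = int lam * int (N - k) + int lam * int (k - 1) + (\<Sum>l\<in>{1..N}-{k}. Iext I k l)"
    unfolding ex_def of_nat_add A B C by (simp add: sum.distrib sum_subtractf sum_negf)
  also have "\<dots> = int lam * (int N - 1) + (\<Sum>l\<in>{1..N}-{k}. Iext I k l)"
    using k by (simp add: algebra_simps of_nat_diff)
  finally have "real_of_int (int (ex N lam I k)) = real_of_int (int lam * (int N - 1) + (\<Sum>l\<in>{1..N}-{k}. Iext I k l))" by simp
  then show ?thesis by (simp add: algebra_simps)
qed



definition Cf :: "nat \<Rightarrow> nat \<Rightarrow> (nat \<times> nat \<Rightarrow> bool) \<Rightarrow> (nat \<times> nat \<Rightarrow> int) \<Rightarrow> real" where
  "Cf N lam S I = (-1)^(lam * card {p\<in>pairs N. S p}) * (-1) powi (\<Sum>p\<in>pairs N. if S p then I p else 0)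
      * (\<Prod>p\<in>pairs N. real ((2*lam) choose nat (int lam + I p)))"

lemma pointwise:
  fixes y :: "nat \<Rightarrow> real"
  shows "(\<Prod>p\<in>pairs N. (y (fst p) + (if S p then -1 else 1) * y (snd p))^(2*lam))
     = (\<Sum>I\<in>families N lam. Cf N lam S I * (\<Prod>k\<in>{1..N}. y k ^ ex N lam I k))"
proof -
  define s where "s p = (if S p then -1 else (1::real))" for p
  define t where "t p i = real((2*lam) choose nat(int lam + i)) * y (fst p)^nat(int lam + i) * s p^nat(int lam - i) * y (snd p)^nat(int lam - i)" for p i
  have "(\<Prod>p\<in>pairs N. (y (fst p) + (if S p then -1 else 1) * y (snd p))^(2*lam))
      = (\<Prod>p\<in>pairs N. \<Sum>i\<in>{-int lam..int lam}. t p i)"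
    unfolding t_def s_def by (rule prod.cong[OF refl]) (rule binexp)
  also have "\<dots> = (\<Sum>I\<in>families N lam. \<Prod>p\<in>pairs N. t p (I p))"
    unfolding families_def by (rule prod_sum_PiE) (auto simp: finite_pairs)
  also have "\<dots> = (\<Sum>I\<in>families N lam. Cf N lam S I * (\<Prod>k\<in>{1..N}. y k ^ ex N lam I k))"
  proof (rule sum.cong[OF refl])
    fix I assume I: "I \<in> families N lam"
    have sg: "(\<Prod>p\<in>pairs N. s p ^ nat(int lam - I p))
        = (\<Prod>p\<in>pairs N. (if S p then (-1)^lam else 1) * (-1) powi (if S p then I p else 0))"
    proof (rule prod.cong[OF refl])
      fix p assume "p \<in> pairs N"
      then have "I p \<in> {-int lam..int lam}" by (rule fam_range[OF I])
      then show "s p ^ nat(int lam - I p) = (if S p then (-1)^lam else 1) * (-1) powi (if S p then I p else 0)"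
        by (auto simp: s_def signlem)
    qed
    have sg2: "(\<Prod>p\<in>pairs N. (if S p then (-1::real)^lam else 1)) = (-1)^(lam * card {p\<in>pairs N. S p})"
      by (simp add: prod.inter_filter[OF finite_pairs, symmetric] power_mult mult.commute)
    have "(\<Prod>p\<in>pairs N. t p (I p)) = (\<Prod>p\<in>pairs N. real ((2*lam) choose nat (int lam + I p)))
        * (\<Prod>p\<in>pairs N. s p ^ nat(int lam - I p))
        * ((\<Prod>p\<in>pairs N. y (fst p) ^ nat(int lam + I p)) * (\<Prod>p\<in>pairs N. y (snd p) ^ nat(int lam - I p)))"
      unfolding t_def by (simp add: prod.distrib mult_ac)
    also have "\<dots> = Cf N lam S I * (\<Prod>k\<in>{1..N}. y k ^ ex N lam I k)"
      unfolding regroup[of y "\<lambda>p. nat(int lam + I p)" N "\<lambda>p. nat(int lam - I p)"] sg prod.distrib sg2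
        prod_powi[OF finite_pairs] Cf_def ex_def
      by (simp add: mult_ac)
    finally show "(\<Prod>p\<in>pairs N. t p (I p)) = Cf N lam S I * (\<Prod>k\<in>{1..N}. y k ^ ex N lam I k)" .
  qed
  finally show ?thesis .
qed

lemma weight_ex: "I \<in> families N lam \<Longrightarrow>
   weight N lam I = (\<Prod>p\<in>pairs N. real ((2*lam) choose nat (int lam + I p))) * (\<Prod>k\<in>{1..N}. 1 / (real (ex N lam I k) + 1))"
  unfolding weight_def
  by (auto intro!: arg_cong2[where f="(*)"] prod.cong simp: exlem case_prod_beta algebra_simps)

theorem general:
  "(LINT y : cube N | PiM {1..N} (\<lambda>_. lborel). (\<Prod>p\<in>pairs N. (y (fst p) + (if S p then -1 else 1) * y (snd p))^(2*lam)))
   = (-1::real)^(lam * card {p\<in>pairs N. S p}) *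
      (\<Sum>I\<in>families N lam. (-1::real) powi (\<Sum>p\<in>pairs N. if S p then I p else 0) * weight N lam I)"
proof -
  let ?M = "PiM {1..N} (\<lambda>_. lborel :: real measure)"
  let ?g = "\<lambda>I y. indicator (cube N) y *\<^sub>R (\<Prod>k\<in>{1..N}. y k ^ ex N lam I k)"
  have "(LINT y : cube N | ?M. (\<Prod>p\<in>pairs N. (y (fst p) + (if S p then -1 else 1) * y (snd p))^(2*lam)))
     = integral\<^sup>L ?M (\<lambda>y. \<Sum>I\<in>families N lam. Cf N lam S I * ?g I y)"
    unfolding set_lebesgue_integral_def pointwise
    by (simp add: sum_distrib_left mult_ac)
  also have "\<dots> = (\<Sum>I\<in>families N lam. integral\<^sup>L ?M (\<lambda>y. Cf N lam S I * ?g I y))"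
    by (rule Bochner_Integration.integral_sum) (use intN in auto)
  also have "\<dots> = (\<Sum>I\<in>families N lam. Cf N lam S I * (\<Prod>k\<in>{1..N}. 1 / (real (ex N lam I k) + 1)))"
    using intN by simp
  also have "\<dots> = (-1::real)^(lam * card {p\<in>pairs N. S p}) *
      (\<Sum>I\<in>families N lam. (-1::real) powi (\<Sum>p\<in>pairs N. if S p then I p else 0) * weight N lam I)"
    unfolding sum_distrib_left
    by (rule sum.cong[OF refl]) (simp add: weight_ex Cf_def mult_ac)
  finally show ?thesis .
qed



lemma pairs_Suc: "pairs (Suc N) = pairs N \<union> (\<lambda>k. (k, Suc N)) ` {1..N}"
  by (auto simp: pairs_def)

lemma card_pairs: "card (pairs N) = N * (N - 1) div 2"
proof (induction N)
  case 0
  have "pairs 0 = {}" by (auto simp: pairs_def)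
  then show ?case by simp
next
  case (Suc N)
  have "card (pairs (Suc N)) = card (pairs N) + N"
    unfolding pairs_Suc
    by (subst card_Un_disjoint[OF finite_pairs]) (auto simp: pairs_def card_image inj_on_def)
  also have "\<dots> = Suc N * (Suc N - 1) div 2"
    unfolding Suc by (cases N) auto
  finally show ?case .
qed

lemma card_same: "card {p\<in>pairs (n+m). case_prod (sameblock n) p} = (n*(n-1) + m*(m-1)) div 2"
proof -
  have E: "{p\<in>pairs (n+m). case_prod (sameblock n) p} = pairs n \<union> (\<lambda>(k,l). (k+n,l+n)) ` pairs m"
  proof (rule set_eqI, rule iffI)
    fix p assume "p \<in> {p\<in>pairs (n+m). case_prod (sameblock n) p}"
    then obtain k l where p: "p = (k,l)" "1 \<le> k" "k < l" "l \<le> n+m" "(k \<le> n) = (l \<le> n)"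
      by (cases p) (auto simp: pairs_def sameblock_def)
    show "p \<in> pairs n \<union> (\<lambda>(k,l). (k+n,l+n)) ` pairs m"
    proof (cases "l \<le> n")
      case True then show ?thesis using p by (auto simp: pairs_def)
    next
      case False
      then have "(k-n, l-n) \<in> pairs m" "p = (\<lambda>(k,l). (k+n,l+n)) (k-n,l-n)" using p by (auto simp: pairs_def)
      then show ?thesis by blast
    qed
  qed (auto simp: pairs_def sameblock_def)
  have "card {p\<in>pairs (n+m). case_prod (sameblock n) p} = card (pairs n) + card (pairs m)"
    unfolding E
    by (subst card_Un_disjoint[OF finite_pairs finite_imageI[OF finite_pairs]]) (auto simp: card_image inj_on_def pairs_def)
  also have "\<dots> = (n*(n-1) + m*(m-1)) div 2"
  proof -
    have "even (n*(n-1))" "even (m*(m-1))" by (cases n; simp; cases m; simp)+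
    then show ?thesis unfolding card_pairs by (auto elim!: evenE)
  qed
  finally show ?thesis .
qed

theorem proposition3:
  fixes lam n m N :: nat
  assumes "N = n + m"
  shows "SN N lam = (-1::real) ^ (lam * (N * (N - 1) div 2)) *
           (\<Sum>I\<in>families N lam.
              (-1::real) powi (\<Sum>p\<in>pairs N. I p) * weight N lam I)
       \<and> Snm n m lam = (-1::real) ^ (lam * ((n * (n - 1) + m * (m - 1)) div 2)) *
           (\<Sum>I\<in>families N lam.
              (-1::real) powi (\<Sum>(k,l)\<in>pairs N. if sameblock n k l then I (k,l) else 0)
              * weight N lam I)"
proof
  have f1: "(\<lambda>y::nat\<Rightarrow>real. \<Prod>(k,l)\<in>pairs N. \<bar>y k - y l\<bar> ^ (2*lam))
      = (\<lambda>y. \<Prod>p\<in>pairs N. (y (fst p) + (if (\<lambda>_. True) p then -1 else 1) * y (snd p))^(2*lam))"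
    by (auto intro!: prod.cong simp: power_even_abs)
  show "SN N lam = (-1::real) ^ (lam * (N * (N - 1) div 2)) *
           (\<Sum>I\<in>families N lam. (-1::real) powi (\<Sum>p\<in>pairs N. I p) * weight N lam I)"
    unfolding SN_def f1 general[of N "\<lambda>_. True" lam] by (simp add: card_pairs)
  have f2: "(\<lambda>y::nat\<Rightarrow>real. \<Prod>(k,l)\<in>pairs (n+m).
         (if sameblock n k l then \<bar>y k - y l\<bar> ^ (2*lam) else \<bar>y k + y l\<bar> ^ (2*lam)))
      = (\<lambda>y. \<Prod>p\<in>pairs (n+m). (y (fst p) + (if case_prod (sameblock n) p then -1 else 1) * y (snd p))^(2*lam))"
    by (auto intro!: prod.cong simp: power_even_abs)
  have f3: "(\<Sum>(k,l)\<in>pairs N. if sameblock n k l then I (k,l) else 0)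
      = (\<Sum>p\<in>pairs N. if case_prod (sameblock n) p then I p else 0)" for I
    by (rule sum.cong) auto
  show "Snm n m lam = (-1::real) ^ (lam * ((n * (n - 1) + m * (m - 1)) div 2)) *
           (\<Sum>I\<in>families N lam.
              (-1::real) powi (\<Sum>(k,l)\<in>pairs N. if sameblock n k l then I (k,l) else 0)
              * weight N lam I)"
    unfolding assms Snm_def f2 general[of "n+m" "case_prod (sameblock n)" lam] card_same
    by (simp only: f3[unfolded assms])
qed


end
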